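(* Let $\rho>0$, $m,m'\in(-\sqrt\rho,\sqrt\rho)$ and $N\in\mathbb{N}$. Then \[ w_2(\mu_{\mathrm{MC}}^{m,\rho;N},\mu_{\mathrm{MC}}^{m',\rho;N};N)\le\left(1+\frac{2}{\sqrt{1-m^2/\rho}}\right)|m-m'|. \]
   Context: Identify the lattice $\Lambda$ ($N=|\Lambda|$) with $[N]$ and field configurations with $\phi\in\mathbb{R}^N$. For $\rho>0$ and $m\in(-\sqrt\rho,\sqrt\rho)$, the auxiliary microcanonical ensemble $\mu_{\mathrm{MC}}^{m,\rho;N}$ is the normalized uniform (surface) probability measure on the $(N-2)$-sphere $\{\phi\in\mathbb{R}^N:\sum_x\phi_x=mN,\ \sum_x\phi_x^2=\rho N\}$; equivalently, with $U$ an orthogonal matrix with $(U\phi)_1=N^{-1/2}\sum_x\phi_x$, $\langle f\rangle_{\mathrm{MC}}^{m,\rho;N}=\frac1{|\mathbb{S}^{N-2}|}\int_{\mathbb{S}^{N-2}}d\Omega\,f(U^{-1}(m\sqrt N,\sqrt{N(\rho-m^2)}\Omega))$. $w_2(\mu_1,\mu_2;N)=\left(\inf_\gamma\int\gamma(dx,dy)\frac1N\sum_{i=1}^N|x_i-y_i|^2\right)^{1/2}$ over couplings $\gamma$ of $\mu_1,\mu_2$. *)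

theory Defs
  imports "HOL-Analysis.Analysis"
begin

text \<open>The lattice \<Lambda> with N = |\<Lambda>| sites is a finite type 'n, N = CARD('n);
  field configurations are vectors in real^'n.\<close>

definition field_sum :: "real ^ 'n::finite \<Rightarrow> real" where
  "field_sum \<phi> = (\<Sum>x\<in>UNIV. \<phi> $ x)"

definition const_field :: "real \<Rightarrow> real ^ 'n::finite" where
  "const_field m = (\<chi> x. m)"

definition hyp_proj :: "real \<Rightarrow> real ^ 'n::finite \<Rightarrow> real ^ 'n" where
  "hyp_proj m \<phi> = \<phi> - ((field_sum \<phi> - m * real CARD('n)) / real CARD('n)) *\<^sub>R const_field 1"

text \<open>Radius of the (N-2)-sphere {\<phi>. \<Sum>\<phi> = mN, \<Sum>\<phi>^2 = \<rho>N} around its centre (m,...,m).\<close>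
definition mc_radius :: "'n::finite itself \<Rightarrow> real \<Rightarrow> real \<Rightarrow> real" where
  "mc_radius _ m \<rho> = sqrt (real CARD('n) * (\<rho> - m\<^sup>2))"

text \<open>Solid cylinder: the (punctured) (N-1)-dimensional ball bounded by the sphere inside the
  hyperplane, thickened by a fixed height in the direction of (1,...,1).  Its N-dimensional
  Lebesgue measure restricted to cones over subsets of the sphere is proportional to the
  (N-1)-dimensional volume of those cones, i.e. to the cone measure.\<close>
definition mc_cylinder :: "real \<Rightarrow> real \<Rightarrow> (real ^ 'n::finite) set" where
  "mc_cylinder m \<rho> = {\<phi>. m * real CARD('n) \<le> field_sum \<phi> \<and> field_sum \<phi> \<le> m * real CARD('n) + 1 \<and>
      0 < norm (hyp_proj m \<phi> - const_field m) \<and>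
      norm (hyp_proj m \<phi> - const_field m) \<le> mc_radius TYPE('n) m \<rho>}"

definition mc_radial :: "real \<Rightarrow> real \<Rightarrow> real ^ 'n::finite \<Rightarrow> real ^ 'n" where
  "mc_radial m \<rho> \<phi> = const_field m +
     (mc_radius TYPE('n) m \<rho> / norm (hyp_proj m \<phi> - const_field m)) *\<^sub>R (hyp_proj m \<phi> - const_field m)"

text \<open>Auxiliary microcanonical ensemble: normalized uniform surface measure on the (N-2)-sphere,
  realised as the (normalized) cone measure = image of the uniform measure on the solid
  cylinder under the radial projection.\<close>
definition mu_MC :: "real \<Rightarrow> real \<Rightarrow> (real ^ 'n::finite) measure" where
  "mu_MC m \<rho> = distr (uniform_measure lborel (mc_cylinder m \<rho>)) borel (mc_radial m \<rho>)"

definition couplings :: "('a::topological_space) measure \<Rightarrow> ('a::topological_space) measure \<Rightarrow> ('a \<times> 'a) measure set" where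
  "couplings \<mu>1 \<mu>2 = {\<gamma>. sets \<gamma> = sets borel \<and> emeasure \<gamma> (space \<gamma>) = 1 \<and>
      distr \<gamma> borel fst = \<mu>1 \<and> distr \<gamma> borel snd = \<mu>2}"

definition w2_sq :: "(real ^ 'n::finite) measure \<Rightarrow> (real ^ 'n) measure \<Rightarrow> ennreal" where
  "w2_sq \<mu>1 \<mu>2 = (INF \<gamma>\<in>couplings \<mu>1 \<mu>2.
      \<integral>\<^sup>+ p. ennreal ((1 / real CARD('n)) * (\<Sum>i\<in>UNIV. \<bar>fst p $ i - snd p $ i\<bar>\<^sup>2)) \<partial>\<gamma>)"

definition w2 :: "(real ^ 'n::finite) measure \<Rightarrow> (real ^ 'n) measure \<Rightarrow> ennreal" where
  "w2 \<mu>1 \<mu>2 = (if w2_sq \<mu>1 \<mu>2 = \<infinity> then \<infinity> else ennreal (sqrt (enn2real (w2_sq \<mu>1 \<mu>2))))"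

end

theory Submission
  imports Defs "HOL-Probability.Probability"
begin


lemma linear_image_scale:
  fixes f :: "real^'n::finite \<Rightarrow> real^'n"
  assumes "linear f"
  shows "\<exists>k\<ge>0. \<forall>S\<in>lmeasurable. f ` S \<in> lmeasurable \<and> measure lebesgue (f ` S) = k * measure lebesgue S"
proof (rule induct_linear_elementary[OF assms, where P = "\<lambda>f. \<exists>k\<ge>0. \<forall>S\<in>lmeasurable. f ` S \<in> lmeasurable \<and> measure lebesgue (f ` S) = k * measure lebesgue S"])
  fix f g :: "real^'n \<Rightarrow> real^'n"
  assume "linear f" "linear g"
    and f: "\<exists>k\<ge>0. \<forall>S\<in>lmeasurable. f ` S \<in> lmeasurable \<and> measure lebesgue (f ` S) = k * measure lebesgue S"
    and g: "\<exists>k\<ge>0. \<forall>S\<in>lmeasurable. g ` S \<in> lmeasurable \<and> measure lebesgue (g ` S) = k * measure lebesgue S"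
  from f obtain kf where kf: "kf \<ge> 0" "\<forall>S\<in>lmeasurable. f ` S \<in> lmeasurable \<and> measure lebesgue (f ` S) = kf * measure lebesgue S" by blast
  from g obtain kg where kg: "kg \<ge> 0" "\<forall>S\<in>lmeasurable. g ` S \<in> lmeasurable \<and> measure lebesgue (g ` S) = kg * measure lebesgue S" by blast
  show "\<exists>k\<ge>0. \<forall>S\<in>lmeasurable. (f \<circ> g) ` S \<in> lmeasurable \<and> measure lebesgue ((f \<circ> g) ` S) = k * measure lebesgue S"
  proof (intro exI[of _ "kf * kg"] conjI ballI)
    fix S :: "(real^'n) set" assume S: "S \<in> lmeasurable"
    have gS: "g ` S \<in> lmeasurable" using kg S by blast
    have eq: "(f \<circ> g) ` S = f ` (g ` S)" by (rule image_comp[symmetric])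
    show "(f \<circ> g) ` S \<in> lmeasurable" unfolding eq using kf gS by blast
    show "measure lebesgue ((f \<circ> g) ` S) = kf * kg * measure lebesgue S"
      unfolding eq using kf(2) gS kg(2) S by (simp del: image_image)
  qed (use kf kg in simp)
next
  fix f :: "real^'n \<Rightarrow> real^'n" and i
  assume "linear f" and 0: "\<And>x. f x $ i = 0"
  then have "\<not> inj f"
    by (metis (full_types) linear_injective_imp_surjective one_neq_zero surjE vec_component)
  show "\<exists>k\<ge>0. \<forall>S\<in>lmeasurable. f ` S \<in> lmeasurable \<and> measure lebesgue (f ` S) = k * measure lebesgue S"
  proof (intro exI[of _ 0] conjI ballI)
    fix S :: "(real^'n) set"
    show "f ` S \<in> lmeasurable"
      using lmeasurable_iff_indicator_has_integral \<open>linear f\<close> \<open>\<not> inj f\<close> negligible_UNIV negligible_linear_singular_image by blast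
    show "measure lebesgue (f ` S) = 0 * measure lebesgue S"
      by (simp add: \<open>\<not> inj f\<close> \<open>linear f\<close> negligible_imp_measure0 negligible_linear_singular_image)
  qed simp
next
  fix c :: "'n \<Rightarrow> real"
  show "\<exists>k\<ge>0. \<forall>S\<in>lmeasurable. (\<lambda>a. \<chi> i. c i * a $ i) ` S \<in> lmeasurable \<and> measure lebesgue ((\<lambda>a. \<chi> i. c i * a $ i) ` S) = k * measure lebesgue S"
    by (intro exI[of _ "\<bar>prod c UNIV\<bar>"]) (auto simp: measurable_stretch measure_stretch)
next
  fix m n :: "'n"
  assume "m \<noteq> n"
  let ?h = "\<lambda>v::(real, 'n) vec. \<chi> i. v $ Transposition.transpose m n i"
  have lin: "linear ?h"
    by (rule linearI) (simp_all add: plus_vec_def scaleR_vec_def)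
  have meq0: "measure lebesgue (?h ` cbox a b) = measure lebesgue (cbox a b)" for a b
  proof (cases "cbox a b = {}")
    case True then show ?thesis
      by simp
  next
    case False
    then have him: "?h ` (cbox a b) \<noteq> {}"
      by blast
    have eq: "?h ` (cbox a b) = cbox (?h a) (?h b)"
      by (auto simp: image_iff lambda_swap_Galois mem_box_cart) (metis transpose_involutory)+
    show ?thesis
      using him prod.permute [OF permutes_swap_id, where S=UNIV and g="\<lambda>i. (b - a)$i", symmetric]
      by (simp add: eq content_cbox_cart False)
  qed
  show "\<exists>k\<ge>0. \<forall>S\<in>lmeasurable. ?h ` S \<in> lmeasurable \<and> measure lebesgue (?h ` S) = k * measure lebesgue S"
  proof (intro exI[of _ 1] conjI ballI)
    fix S :: "(real^'n) set" assume S: "S \<in> lmeasurable"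
    have meq: "measure lebesgue (?h ` cbox a b) = 1 * measure lebesgue (cbox a b)" for a b
      using meq0[of a b] by (simp only: mult_1)
    have "?h ` S \<in> lmeasurable \<and> 1 * measure lebesgue S = measure lebesgue (?h ` S)"
      by (rule measure_linear_sufficient [OF lin S meq])
    then show "?h ` S \<in> lmeasurable" "measure lebesgue (?h ` S) = 1 * measure lebesgue S" by simp_all
  qed simp
next
  fix m n :: "'n"
  assume "m \<noteq> n"
  let ?h = "\<lambda>v::(real, 'n) vec. \<chi> i. if i = m then v $ m + v $ n else v $ i"
  have lin: "linear ?h"
    by (rule linearI) (auto simp: algebra_simps plus_vec_def scaleR_vec_def vec_eq_iff)
  have meq0: "measure lebesgue (?h ` (cbox a b)) = measure lebesgue (cbox a b)" for a b
  proof (cases "cbox a b = {}")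
    case True then show ?thesis by simp
  next
    case False
    then have ne: "(+) (\<chi> i. if i = n then - a $ n else 0) ` cbox a b \<noteq> {}"
      by auto
    let ?v = "\<chi> i. if i = n then - a $ n else 0"
    have "?h ` cbox a b
          = (+) (\<chi> i. if i = m \<or> i = n then a $ n else 0) ` ?h ` (+) ?v ` (cbox a b)"
      using \<open>m \<noteq> n\<close> unfolding image_comp o_def by (force simp: vec_eq_iff)
    then have "measure lebesgue (?h ` (cbox a b))
             = measure lebesgue ((\<lambda>v. \<chi> i. if i = m then v $ m + v $ n else v $ i) `
                                 (+) ?v ` cbox a b)"
      by (rule ssubst) (rule measure_translation)
    also have "\<dots> = measure lebesgue ((\<lambda>v. \<chi> i. if i = m then v $ m + v $ n else v $ i) ` cbox (?v +a) (?v + b))"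
      by (metis (no_types, lifting) cbox_translation)
    also have "\<dots> = measure lebesgue ((+) ?v ` cbox a b)"
      apply (subst measure_shear_interval)
      using \<open>m \<noteq> n\<close> ne apply auto
      apply (simp add: cbox_translation)
      by (metis cbox_borel cbox_translation measure_completion sets_lborel)
    also have "\<dots> = measure lebesgue (cbox a b)"
      by (rule measure_translation)
    finally show ?thesis .
  qed
  show "\<exists>k\<ge>0. \<forall>S\<in>lmeasurable. ?h ` S \<in> lmeasurable \<and> measure lebesgue (?h ` S) = k * measure lebesgue S"
  proof (intro exI[of _ 1] conjI ballI)
    fix S :: "(real^'n) set" assume S: "S \<in> lmeasurable"
    have meq: "measure lebesgue (?h ` cbox a b) = 1 * measure lebesgue (cbox a b)" for a b
      using meq0[of a b] by (simp only: mult_1)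
    have "?h ` S \<in> lmeasurable \<and> 1 * measure lebesgue S = measure lebesgue (?h ` S)"
      by (rule measure_linear_sufficient [OF lin S meq])
    then show "?h ` S \<in> lmeasurable" "measure lebesgue (?h ` S) = 1 * measure lebesgue S" by simp_all
  qed simp
qed



definition prj :: "real^'n::finite \<Rightarrow> real^'n" where
  "prj \<phi> = \<phi> - (field_sum \<phi> / real CARD('n)) *\<^sub>R const_field 1"

lemma field_sum_add: "field_sum (x + y) = field_sum x + field_sum (y :: real^'n::finite)"
  by (simp add: field_sum_def sum.distrib)
lemma field_sum_diff: "field_sum (x - y) = field_sum x - field_sum (y :: real^'n::finite)"
  by (simp add: field_sum_def sum_subtractf)
lemma field_sum_scaleR: "field_sum (c *\<^sub>R x) = c * field_sum (x :: real^'n::finite)"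
  by (simp add: field_sum_def sum_distrib_left)
lemma field_sum_const: "field_sum (const_field c :: real^'n::finite) = c * real CARD('n)"
  by (simp add: field_sum_def const_field_def)
lemma const_field_scale: "const_field c = c *\<^sub>R (const_field 1 :: real^'n::finite)"
  by (simp add: const_field_def vec_eq_iff)
lemma field_sum_inner: "x \<bullet> const_field 1 = field_sum (x :: real^'n::finite)"
  by (simp add: field_sum_def const_field_def inner_vec_def)
lemma norm_const1: "norm (const_field 1 :: real^'n::finite) ^ 2 = real CARD('n)"
  by (simp add: power2_norm_eq_inner field_sum_inner field_sum_const)

lemma hyp_proj_minus: "hyp_proj m \<phi> - const_field m = prj (\<phi> :: real^'n::finite)"
proof -
  have N: "real CARD('n) \<noteq> 0" by simp
  show ?thesis unfolding hyp_proj_def prj_def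
    apply (subst const_field_scale[of m])
    using N by (simp add: algebra_simps diff_divide_distrib)
qed

lemma field_sum_prj: "field_sum (prj (x :: real^'n::finite)) = 0"
  by (simp add: prj_def field_sum_diff field_sum_scaleR field_sum_const)

lemma linear_field_sum: "linear (field_sum :: real^'n::finite \<Rightarrow> real)"
  by (rule linearI) (simp_all add: field_sum_add field_sum_scaleR)

lemma linear_prj: "linear (prj :: real^'n::finite \<Rightarrow> real^'n)"
  by (rule linearI) (simp_all add: prj_def field_sum_add field_sum_scaleR algebra_simps add_divide_distrib)

lemma prj_const: "prj (const_field c :: real^'n::finite) = 0"
  by (simp add: prj_def field_sum_const flip: const_field_scale)

lemma prj_prj: "prj (prj x) = prj (x :: real^'n::finite)"
  by (simp add: prj_def[of "prj x"] field_sum_prj)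

lemma prj_add_const: "prj (x + c *\<^sub>R const_field 1) = prj (x :: real^'n::finite)"
  by (simp add: linear_add[OF linear_prj] linear_scale[OF linear_prj] prj_const)

lemma cost_eq: "(\<Sum>i\<in>UNIV. \<bar>x $ i - y $ i\<bar>\<^sup>2) = norm (x - y :: real^'n::finite) ^ 2"
  by (simp only: power2_norm_eq_inner inner_vec_def) (simp add: power2_eq_square)

lemma cont_field_sum: "continuous_on UNIV (field_sum :: real^'n::finite \<Rightarrow> real)"
  using linear_field_sum by (intro linear_continuous_on) (simp add: linear_conv_bounded_linear)
lemma cont_prj: "continuous_on UNIV (prj :: real^'n::finite \<Rightarrow> real^'n)"
  using linear_prj by (intro linear_continuous_on) (simp add: linear_conv_bounded_linear)

lemma meas_field_sum[measurable]: "(field_sum :: real^'n::finite \<Rightarrow> real) \<in> borel_measurable borel"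
  by (rule borel_measurable_continuous_onI[OF cont_field_sum])
lemma meas_prj[measurable]: "(prj :: real^'n::finite \<Rightarrow> real^'n) \<in> borel_measurable borel"
  by (rule borel_measurable_continuous_onI[OF cont_prj])

lemma cyl_eq: "mc_cylinder m \<rho> = {\<phi> :: real^'n::finite. m * real CARD('n) \<le> field_sum \<phi> \<and> field_sum \<phi> \<le> m * real CARD('n) + 1 \<and>
      0 < norm (prj \<phi>) \<and> norm (prj \<phi>) \<le> mc_radius TYPE('n) m \<rho>}"
  by (simp add: mc_cylinder_def hyp_proj_minus)

lemma radial_eq: "mc_radial m \<rho> \<phi> = const_field m + (mc_radius TYPE('n) m \<rho> / norm (prj \<phi>)) *\<^sub>R prj (\<phi> :: real^'n::finite)"
  by (simp add: mc_radial_def hyp_proj_minus)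

lemma cyl_borel: "mc_cylinder m \<rho> \<in> sets (borel :: (real^'n::finite) measure)"
  unfolding cyl_eq by measurable

lemma radial_meas[measurable]: "(mc_radial m \<rho> :: real^'n::finite \<Rightarrow> _) \<in> borel_measurable borel"
  unfolding radial_eq[abs_def] by measurable

lemma cyl_bounded: "bounded (mc_cylinder m \<rho> :: (real^'n::finite) set)"
proof -
  let ?N = "real CARD('n)"
  let ?R = "mc_radius TYPE('n) m \<rho>"
  have "norm \<phi> \<le> ?R + (\<bar>m * ?N\<bar> + 1) / ?N * norm (const_field 1 :: real^'n)" if "\<phi> \<in> mc_cylinder m \<rho>" for \<phi> :: "real^'n"
  proof -
    have d: "\<phi> = prj \<phi> + (field_sum \<phi> / ?N) *\<^sub>R const_field 1" by (simp add: prj_def)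
    have "\<bar>field_sum \<phi>\<bar> \<le> \<bar>m * ?N\<bar> + 1" using that unfolding cyl_eq by auto
    then have "\<bar>field_sum \<phi> / ?N\<bar> \<le> (\<bar>m * ?N\<bar> + 1) / ?N"
      by (simp add: abs_div divide_right_mono)
    then have "norm ((field_sum \<phi> / ?N) *\<^sub>R (const_field 1 :: real^'n)) \<le> (\<bar>m * ?N\<bar> + 1) / ?N * norm (const_field 1 :: real^'n)"
      by (simp only: norm_scaleR) (rule mult_right_mono[OF _ norm_ge_zero])
    moreover have "norm (prj \<phi>) \<le> ?R" using that unfolding cyl_eq by auto
    ultimately show ?thesis
      by (metis d add_mono norm_triangle_le)
  qed
  then show ?thesis unfolding bounded_iff by blast
qed



lemma borel_bounded_lmeas:
  fixes X :: "(real^'n::finite) set"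
  assumes "X \<in> sets borel" "bounded X"
  shows "X \<in> lmeasurable" "emeasure lborel X = ennreal (measure lebesgue X)"
proof -
  have Xl: "X \<in> sets lebesgue" using assms(1) by simp
  show Xm: "X \<in> lmeasurable" by (rule bounded_set_imp_lmeasurable[OF assms(2) Xl])
  have "emeasure lborel X = emeasure lebesgue X" using assms(1) by simp
  also have "\<dots> = ennreal (measure lebesgue X)"
    using Xm by (simp add: emeasure_eq_measure2)
  finally show "emeasure lborel X = ennreal (measure lebesgue X)" .
qed

lemma exists_two:
  assumes "CARD('n) \<ge> 2"
  obtains i j :: "'n::finite" where "i \<noteq> j"
proof -
  obtain i :: 'n where True by blast
  have "\<exists>j::'n. j \<noteq> i"
  proof (rule ccontr)
    assume "\<not> (\<exists>j::'n. j \<noteq> i)"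
    then have U: "(UNIV :: 'n set) = {i}" by auto
    have "card (UNIV::'n set) = card {i}" by (simp only: U)
    then show False using assms by simp
  qed
  then show ?thesis using that by blast
qed

lemma cyl_pos:
  assumes "CARD('n::finite) \<ge> 2" and R: "mc_radius TYPE('n) m \<rho> > 0"
  shows "measure lebesgue (mc_cylinder m \<rho> :: (real^'n) set) > 0"
proof -
  let ?N = "real CARD('n)"
  let ?R = "mc_radius TYPE('n) m \<rho>"
  let ?e = "const_field 1 :: real^'n"
  obtain i j :: 'n where ij: "i \<noteq> j" using exists_two[OF assms(1)] by blast
  define w :: "real^'n" where "w = axis i 1 - axis j 1"
  have fw: "field_sum w = 0"
    by (simp add: w_def field_sum_def axis_def sum_subtractf)
  have w0: "w \<noteq> 0"
  proof
    assume "w = 0"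
    then have "w $ i = 0" by simp
    then show False using ij by (simp add: w_def axis_def)
  qed
  define v where "v = (?R / 2 / norm w) *\<^sub>R w"
  have fv: "field_sum v = 0" by (simp add: v_def field_sum_scaleR fw)
  have pv: "prj v = v" by (simp add: prj_def fv)
  have nv: "norm v = ?R / 2" using w0 R by (simp add: v_def)
  define p where "p = const_field m + (1 / (2 * ?N)) *\<^sub>R ?e + v"
  have fp: "field_sum p = m * ?N + 1/2"
    by (simp add: p_def field_sum_add field_sum_scaleR field_sum_const fv)
  have pp: "prj p = v"
    by (simp add: p_def linear_add[OF linear_prj] linear_scale[OF linear_prj] prj_const pv)
  define Oset where "Oset = {\<phi>::real^'n. m * ?N < field_sum \<phi> \<and> field_sum \<phi> < m * ?N + 1 \<and> 0 < norm (prj \<phi>) \<and> norm (prj \<phi>) < ?R}"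
  have cn: "continuous_on UNIV (\<lambda>\<phi>::real^'n. norm (prj \<phi>))"
    by (intro continuous_on_norm cont_prj)
  have "open Oset" unfolding Oset_def
    by (intro open_Collect_conj open_Collect_less continuous_on_const cont_field_sum cn)
  moreover have "p \<in> Oset"
    unfolding Oset_def mem_Collect_eq fp pp nv using R by simp
  ultimately obtain r where r: "r > 0" "ball p r \<subseteq> Oset" by (meson open_contains_ball)
  have OC: "Oset \<subseteq> mc_cylinder m \<rho>" unfolding Oset_def cyl_eq by auto
  have Cm: "mc_cylinder m \<rho> \<in> lmeasurable"
    by (rule borel_bounded_lmeas(1)[OF cyl_borel cyl_bounded])
  have "0 < measure lebesgue (ball p r)" using content_ball_pos[OF r(1), of p] by simp
  also have "\<dots> \<le> measure lebesgue (mc_cylinder m \<rho> :: (real^'n) set)"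
  proof (rule measure_mono_fmeasurable)
    show "ball p r \<subseteq> mc_cylinder m \<rho>" using r(2) OC by blast
    show "ball p r \<in> sets lebesgue" by simp
    show "mc_cylinder m \<rho> \<in> lmeasurable" by (rule Cm)
  qed
  finally show ?thesis .
qed



lemma cyl_transport:
  fixes m m' \<rho> R R' :: real
  assumes N2: "CARD('n::finite) \<ge> 2"
    and Rdef: "R = mc_radius TYPE('n) m \<rho>" and R'def: "R' = mc_radius TYPE('n) m' \<rho>"
    and R: "R > 0" and R': "R' > 0"
  shows "distr (uniform_measure lborel (mc_cylinder m \<rho> :: (real^'n) set)) borel
            (\<lambda>\<phi>. \<phi> + (m' - m) *\<^sub>R const_field 1 + (R'/R - 1) *\<^sub>R prj \<phi>)
         = uniform_measure lborel (mc_cylinder m' \<rho>)"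
proof -
  let ?N = "real CARD('n)"
  let ?e = "const_field 1 :: real^'n"
  define A where "A = (\<lambda>\<phi>::real^'n. \<phi> + (m' - m) *\<^sub>R ?e + (R'/R - 1) *\<^sub>R prj \<phi>)"
  define Ai where "Ai = (\<lambda>\<phi>::real^'n. \<phi> - (m' - m) *\<^sub>R ?e + (R/R' - 1) *\<^sub>R prj \<phi>)"
  define C where "C = (mc_cylinder m \<rho> :: (real^'n) set)"
  define C' where "C' = (mc_cylinder m' \<rho> :: (real^'n) set)"
  have fsA: "field_sum (A \<phi>) = field_sum \<phi> + (m' - m) * ?N" for \<phi>
    by (simp add: A_def field_sum_add field_sum_scaleR field_sum_const field_sum_prj)
  have pA: "prj (A \<phi>) = (R'/R) *\<^sub>R prj \<phi>" for \<phi>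
  proof -
    have "prj (A \<phi>) = prj \<phi> + (R'/R - 1) *\<^sub>R prj \<phi>"
      by (simp add: A_def linear_add[OF linear_prj] linear_scale[OF linear_prj] prj_const prj_prj)
    also have "\<dots> = (R'/R) *\<^sub>R prj \<phi>" by (simp add: algebra_simps)
    finally show ?thesis .
  qed
  have pAi: "prj (Ai \<phi>) = (R/R') *\<^sub>R prj \<phi>" for \<phi>
  proof -
    have "prj (Ai \<phi>) = prj \<phi> + (R/R' - 1) *\<^sub>R prj \<phi>"
      by (simp add: Ai_def linear_add[OF linear_prj] linear_diff[OF linear_prj] linear_scale[OF linear_prj] prj_const prj_prj)
    also have "\<dots> = (R/R') *\<^sub>R prj \<phi>" by (simp add: algebra_simps)
    finally show ?thesis .
  qed
  have AiA: "Ai (A \<phi>) = \<phi>" for \<phi>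
    using R R' by (simp add: Ai_def pA) (simp add: A_def vec_eq_iff field_simps)
  have AAi: "A (Ai \<phi>) = \<phi>" for \<phi>
    using R R' by (simp add: A_def pAi) (simp add: Ai_def vec_eq_iff field_simps)
  have vimg: "A -` X = Ai ` X" for X
  proof
    show "A -` X \<subseteq> Ai ` X"
    proof
      fix x assume "x \<in> A -` X"
      then show "x \<in> Ai ` X" using AiA[of x] by (metis image_eqI vimageE)
    qed
    show "Ai ` X \<subseteq> A -` X" using AAi by auto
  qed
  have cylA: "A -` C' = C"
  proof -
    have "A \<phi> \<in> C' \<longleftrightarrow> \<phi> \<in> C" for \<phi>
    proof -
      have n: "norm (prj (A \<phi>)) = (R'/R) * norm (prj \<phi>)" using R R' by (simp add: pA)
      have e1: "(R'/R) * norm (prj \<phi>) \<le> R' \<longleftrightarrow> norm (prj \<phi>) \<le> R"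
        using R R' by (simp add: field_simps)
      have e2: "0 < (R'/R) * norm (prj \<phi>) \<longleftrightarrow> 0 < norm (prj \<phi>)"
      proof -
        have q: "0 < R'/R" using R R' by simp
        show ?thesis using q by (meson mult_pos_pos zero_less_mult_pos)
      qed
      show ?thesis unfolding C'_def C_def cyl_eq mem_Collect_eq fsA n e2
        unfolding R'def[symmetric] Rdef[symmetric] e1 by (auto simp: algebra_simps)
    qed
    then show ?thesis by auto
  qed
  obtain L where L: "L = (\<lambda>\<psi>::real^'n. \<psi> + (R/R' - 1) *\<^sub>R prj \<psi>)" by blast
  have linL: "linear L" unfolding L
    by (rule linearI) (simp_all add: linear_add[OF linear_prj] linear_scale[OF linear_prj] algebra_simps)
  obtain k where k: "k \<ge> 0" "\<forall>S\<in>lmeasurable. L ` S \<in> lmeasurable \<and> measure lebesgue (L ` S) = k * measure lebesgue S"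
    using linear_image_scale[OF linL] by blast
  have AiL: "Ai ` S = (+) (- ((m' - m) *\<^sub>R ?e)) ` (L ` S)" for S
  proof -
    have "Ai = (\<lambda>x. (- ((m' - m) *\<^sub>R ?e)) + L x)" unfolding Ai_def L by (auto simp: algebra_simps)
    then show ?thesis by (simp add: image_image)
  qed
  have scale: "Ai ` S \<in> lmeasurable \<and> measure lebesgue (Ai ` S) = k * measure lebesgue S" if "S \<in> lmeasurable" for S
  proof -
    have LS: "L ` S \<in> lmeasurable" "measure lebesgue (L ` S) = k * measure lebesgue S" using k(2) that by auto
    show ?thesis unfolding AiL
      using measurable_translation[OF LS(1), of "- ((m' - m) *\<^sub>R ?e)"]
        measure_translation[of "- ((m' - m) *\<^sub>R ?e)" "L ` S"] LS(2) by (simp del: image_image)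
  qed
  have Cb: "C \<in> sets borel" "bounded C" unfolding C_def by (rule cyl_borel, rule cyl_bounded)
  have C'b: "C' \<in> sets borel" "bounded C'" unfolding C'_def by (rule cyl_borel, rule cyl_bounded)
  have posC: "measure lebesgue C > 0" unfolding C_def using cyl_pos[OF N2, of m \<rho>] R Rdef by simp
  have posC': "measure lebesgue C' > 0" unfolding C'_def using cyl_pos[OF N2, of m' \<rho>] R' R'def by simp
  have C'l: "C' \<in> lmeasurable" by (rule borel_bounded_lmeas(1)[OF C'b])
  have mC: "measure lebesgue C = k * measure lebesgue C'"
    using scale[OF C'l] cylA vimg by simp
  have kpos: "k > 0" using posC mC k(1) posC'
    by (metis less_eq_real_def mult_zero_left)
  have contA: "continuous_on UNIV A" unfolding A_def
    by (intro continuous_intros cont_prj)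
  have measA: "A \<in> borel_measurable borel" by (rule borel_measurable_continuous_onI[OF contA])
  let ?M = "uniform_measure lborel C"
  have "distr ?M borel A = distr ?M lborel A" by (rule distr_cong) simp_all
  also have "\<dots> = uniform_measure lborel C'"
  proof (rule uniform_distrI)
    show "A \<in> measurable ?M lborel" using measA by (simp add: measurable_cong_sets[of ?M borel lborel borel])
    show "C' \<in> sets lborel" using C'b by simp
    have eC': "emeasure lborel C' = ennreal (measure lebesgue C')" by (rule borel_bounded_lmeas(2)[OF C'b])
    show "emeasure lborel C' \<noteq> \<infinity>" unfolding eC' by simp
    show "emeasure lborel C' \<noteq> 0" unfolding eC' using posC' by simp
    fix B :: "(real^'n) set" assume B: "B \<in> sets lborel"
    have AB: "A -` B \<in> sets borel" using measA B by (simp add: measurable_sets_borel)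
    have sp: "space ?M = UNIV" by simp
    have e1: "emeasure ?M (A -` B \<inter> space ?M) = emeasure lborel (C \<inter> A -` B) / emeasure lborel C"
      unfolding sp using AB Cb by simp
    have CB: "C \<inter> A -` B = Ai ` (C' \<inter> B)" using cylA vimg[of "C' \<inter> B"] by auto
    have C'B: "C' \<inter> B \<in> sets borel" "bounded (C' \<inter> B)" using C'b B by auto
    have CAB: "C \<inter> A -` B \<in> sets borel" "bounded (C \<inter> A -` B)" using Cb AB by auto
    have "emeasure lborel (C \<inter> A -` B) = ennreal (measure lebesgue (C \<inter> A -` B))"
      by (rule borel_bounded_lmeas(2)[OF CAB])
    also have "\<dots> = ennreal (k * measure lebesgue (C' \<inter> B))"
      unfolding CB using scale[OF borel_bounded_lmeas(1)[OF C'B]] by simp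
    finally have e2: "emeasure lborel (C \<inter> A -` B) = ennreal (k * measure lebesgue (C' \<inter> B))" .
    have e3: "emeasure lborel C = ennreal (k * measure lebesgue C')"
      using borel_bounded_lmeas(2)[OF Cb] mC by simp
    have e4: "emeasure lborel (C' \<inter> B) = ennreal (measure lebesgue (C' \<inter> B))"
      by (rule borel_bounded_lmeas(2)[OF C'B])
    show "emeasure ?M (A -` B \<inter> space ?M) = emeasure lborel (C' \<inter> B) / emeasure lborel C'"
      unfolding e1 e2 e3 e4 eC' using kpos posC'
      by (simp add: divide_ennreal)
  qed
  finally show ?thesis unfolding A_def C_def C'_def .
qed



lemma final_ineq:
  fixes \<rho> m m' :: real
  assumes r: "\<rho> > 0" and hm: "\<bar>m\<bar> < sqrt \<rho>" and hm': "\<bar>m'\<bar> < sqrt \<rho>"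
  shows "sqrt ((m - m')\<^sup>2 + (sqrt (\<rho> - m\<^sup>2) - sqrt (\<rho> - m'\<^sup>2))\<^sup>2) \<le> (1 + 2 / sqrt (1 - m\<^sup>2 / \<rho>)) * \<bar>m - m'\<bar>"
proof -
  define s where "s = sqrt (\<rho> - m\<^sup>2)"
  define s' where "s' = sqrt (\<rho> - m'\<^sup>2)"
  have m2: "m\<^sup>2 < \<rho>" using hm r by (metis abs_ge_zero real_sqrt_abs real_sqrt_less_iff)
  have m2': "m'\<^sup>2 < \<rho>" using hm' r by (metis abs_ge_zero real_sqrt_abs real_sqrt_less_iff)
  have sp: "s > 0" unfolding s_def using m2 by simp
  have sp': "s' > 0" unfolding s'_def using m2' by simp
  have ss: "s\<^sup>2 = \<rho> - m\<^sup>2" unfolding s_def using m2 by simp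
  have ss': "s'\<^sup>2 = \<rho> - m'\<^sup>2" unfolding s'_def using m2' by simp
  have sq: "sqrt ((m - m')\<^sup>2 + (s - s')\<^sup>2) \<le> \<bar>m - m'\<bar> + \<bar>s - s'\<bar>"
  proof (rule real_le_lsqrt)
    show "(m - m')\<^sup>2 + (s - s')\<^sup>2 \<le> (\<bar>m - m'\<bar> + \<bar>s - s'\<bar>)\<^sup>2"
      by (simp add: power2_eq_square algebra_simps)
  qed (auto intro: add_nonneg_nonneg)
  have "\<bar>s - s'\<bar> * (s + s') = \<bar>m - m'\<bar> * \<bar>m + m'\<bar>"
  proof -
    have "\<bar>s - s'\<bar> * (s + s') = \<bar>(s - s') * (s + s')\<bar>" using sp sp' by (simp add: abs_mult)
    also have "(s - s') * (s + s') = s\<^sup>2 - s'\<^sup>2" by (simp add: power2_eq_square algebra_simps)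
    also have "\<dots> = (m' - m) * (m' + m)" unfolding ss ss' by (simp add: power2_eq_square algebra_simps)
    finally show ?thesis by (simp add: abs_mult abs_minus_commute add.commute)
  qed
  then have e1: "\<bar>s - s'\<bar> = \<bar>m - m'\<bar> * \<bar>m + m'\<bar> / (s + s')" using sp sp' by (simp add: field_simps)
  have mm: "\<bar>m + m'\<bar> \<le> 2 * sqrt \<rho>" using hm hm' by linarith
  have "\<bar>m + m'\<bar> / (s + s') \<le> 2 * sqrt \<rho> / s"
  proof -
    have "\<bar>m + m'\<bar> / (s + s') \<le> \<bar>m + m'\<bar> / s"
      using sp sp' by (intro divide_left_mono) auto
    also have "\<dots> \<le> 2 * sqrt \<rho> / s" using mm sp by (intro divide_right_mono) auto
    finally show ?thesis .
  qed
  then have e2: "\<bar>s - s'\<bar> \<le> \<bar>m - m'\<bar> * (2 * sqrt \<rho> / s)"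
    unfolding e1 by (metis abs_ge_zero mult_left_mono times_divide_eq_right)
  have "sqrt (1 - m\<^sup>2 / \<rho>) = s / sqrt \<rho>"
  proof -
    have "1 - m\<^sup>2 / \<rho> = (\<rho> - m\<^sup>2) / \<rho>" using r by (simp add: field_simps)
    then show ?thesis unfolding s_def by (simp add: real_sqrt_divide)
  qed
  then have e3: "2 / sqrt (1 - m\<^sup>2 / \<rho>) = 2 * sqrt \<rho> / s" using sp r by simp
  have "sqrt ((m - m')\<^sup>2 + (s - s')\<^sup>2) \<le> \<bar>m - m'\<bar> + \<bar>m - m'\<bar> * (2 * sqrt \<rho> / s)"
    using sq e2 by linarith
  also have "\<dots> = (1 + 2 / sqrt (1 - m\<^sup>2 / \<rho>)) * \<bar>m - m'\<bar>" unfolding e3 by (simp add: algebra_simps)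
  finally show ?thesis unfolding s_def s'_def .
qed



theorem theorem4p7:
  fixes \<rho> m m' :: real
  assumes "CARD('n::finite) \<ge> 2"
    and "\<rho> > 0"
    and "\<bar>m\<bar> < sqrt \<rho>" and "\<bar>m'\<bar> < sqrt \<rho>"
  shows "w2 (mu_MC m \<rho> :: (real ^ 'n) measure) (mu_MC m' \<rho>)
           \<le> ennreal ((1 + 2 / sqrt (1 - m\<^sup>2 / \<rho>)) * \<bar>m - m'\<bar>)"
proof -
  note N2 = assms(1)
  let ?N = "real CARD('n)"
  let ?e = "const_field 1 :: real^'n"
  define R where "R = mc_radius TYPE('n) m \<rho>"
  define R' where "R' = mc_radius TYPE('n) m' \<rho>"
  define s where "s = sqrt (\<rho> - m\<^sup>2)"
  define s' where "s' = sqrt (\<rho> - m'\<^sup>2)"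
  have m2: "m\<^sup>2 < \<rho>" using assms by (metis abs_ge_zero real_sqrt_abs real_sqrt_less_iff)
  have m2': "m'\<^sup>2 < \<rho>" using assms by (metis abs_ge_zero real_sqrt_abs real_sqrt_less_iff)
  have Rs: "R = sqrt ?N * s" unfolding R_def s_def mc_radius_def by (simp add: real_sqrt_mult)
  have Rs': "R' = sqrt ?N * s'" unfolding R'_def s'_def mc_radius_def by (simp add: real_sqrt_mult)
  have Npos: "?N > 0" by simp
  have Rp: "R > 0" unfolding Rs s_def using m2 by simp
  have Rp': "R' > 0" unfolding Rs' s'_def using m2' by simp
  define C where "C = (mc_cylinder m \<rho> :: (real^'n) set)"
  define C' where "C' = (mc_cylinder m' \<rho> :: (real^'n) set)"
  define A where "A = (\<lambda>\<phi>::real^'n. \<phi> + (m' - m) *\<^sub>R ?e + (R'/R - 1) *\<^sub>R prj \<phi>)"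
  define T where "T = (\<lambda>x::real^'n. const_field m' + (R'/R) *\<^sub>R (x - const_field m))"
  let ?M = "uniform_measure lborel C"
  have Cb: "C \<in> sets borel" "bounded C" unfolding C_def by (rule cyl_borel, rule cyl_bounded)
  have posC: "measure lebesgue C > 0" unfolding C_def using cyl_pos[OF N2, of m \<rho>] Rp R_def by simp
  have eC: "emeasure lborel C = ennreal (measure lebesgue C)" by (rule borel_bounded_lmeas(2)[OF Cb])
  have probM: "prob_space ?M"
    by (rule prob_space_uniform_measure) (use eC posC in simp_all)
  have setsM: "sets ?M = sets borel" by simp
  have tr: "distr ?M borel A = uniform_measure lborel C'"
    unfolding A_def C_def C'_def by (rule cyl_transport[OF N2 R_def R'_def Rp Rp'])
  have measA: "A \<in> borel_measurable borel"
    unfolding A_def by (intro borel_measurable_continuous_onI continuous_intros cont_prj)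
  have measT: "T \<in> borel_measurable borel"
    unfolding T_def by (intro borel_measurable_continuous_onI continuous_intros)
  have measAM: "A \<in> measurable ?M borel" using measA by (simp add: measurable_cong_sets[OF setsM refl])
  have measRM: "mc_radial m \<rho> \<in> measurable ?M borel" using radial_meas by (simp add: measurable_cong_sets[OF setsM refl])
  have comp: "mc_radial m' \<rho> (A \<phi>) = T (mc_radial m \<rho> \<phi>)" for \<phi>
  proof -
    let ?p = "prj \<phi>"
    have pA: "prj (A \<phi>) = (R'/R) *\<^sub>R ?p"
    proof -
      have "prj (A \<phi>) = prj \<phi> + (R'/R - 1) *\<^sub>R prj \<phi>"
        by (simp add: A_def linear_add[OF linear_prj] linear_scale[OF linear_prj] prj_const prj_prj)
      also have "\<dots> = (R'/R) *\<^sub>R prj \<phi>" by (simp add: algebra_simps)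
      finally show ?thesis .
    qed
    show ?thesis
    proof (cases "?p = 0")
      case True
      then show ?thesis by (simp add: radial_eq pA T_def)
    next
      case False
      then have n: "norm ?p > 0" by simp
      have "mc_radial m' \<rho> (A \<phi>) = const_field m' + (R' / ((R'/R) * norm ?p) * (R'/R)) *\<^sub>R ?p"
        unfolding radial_eq pA R'_def[symmetric] using Rp Rp' by simp
      also have "R' / ((R'/R) * norm ?p) * (R'/R) = (R'/R) * (R / norm ?p)"
        using Rp Rp' n by (simp add: field_simps)
      also have "const_field m' + ((R'/R) * (R / norm ?p)) *\<^sub>R ?p = T (mc_radial m \<rho> \<phi>)"
        unfolding T_def radial_eq R_def[symmetric] by simp
      finally show ?thesis .
    qed
  qed
  have transport: "mu_MC m' \<rho> = distr (mu_MC m \<rho>) borel T"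
  proof -
    have "mu_MC m' \<rho> = distr (distr ?M borel A) borel (mc_radial m' \<rho>)"
      unfolding mu_MC_def tr C'_def ..
    also have "\<dots> = distr ?M borel (mc_radial m' \<rho> \<circ> A)"
      by (rule distr_distr[OF radial_meas measAM])
    also have "mc_radial m' \<rho> \<circ> A = T \<circ> mc_radial m \<rho>" using comp by auto
    also have "distr ?M borel (T \<circ> mc_radial m \<rho>) = distr (distr ?M borel (mc_radial m \<rho>)) borel T"
      by (rule distr_distr[OF measT measRM, symmetric])
    finally show ?thesis unfolding mu_MC_def C_def .
  qed
  define \<mu> where "\<mu> = (mu_MC m \<rho> :: (real^'n) measure)"
  have mu_def': "\<mu> = distr ?M borel (mc_radial m \<rho>)" unfolding \<mu>_def mu_MC_def C_def ..
  have probmu: "prob_space \<mu>" unfolding mu_def' by (rule prob_space.prob_space_distr[OF probM measRM])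
  have setsmu: "sets \<mu> = sets borel" unfolding mu_def' by simp
  define pr where "pr = (\<lambda>x::real^'n. (x, T x))"
  have measpr: "pr \<in> measurable \<mu> borel"
  proof -
    have "pr \<in> borel_measurable borel"
      unfolding pr_def T_def by (intro borel_measurable_continuous_onI continuous_intros)
    then show ?thesis by (simp add: measurable_cong_sets[OF setsmu refl])
  qed
  define \<gamma> where "\<gamma> = distr \<mu> borel pr"
  have gam: "\<gamma> \<in> couplings (mu_MC m \<rho>) (mu_MC m' \<rho>)"
    unfolding couplings_def mem_Collect_eq
  proof (intro conjI)
    show "sets \<gamma> = sets borel" unfolding \<gamma>_def by simp
    show "emeasure \<gamma> (space \<gamma>) = 1" unfolding \<gamma>_def
      by (rule prob_space.emeasure_space_1[OF prob_space.prob_space_distr[OF probmu measpr]])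
    have "distr \<gamma> borel fst = distr \<mu> borel (fst \<circ> pr)" unfolding \<gamma>_def
      by (rule distr_distr[OF _ measpr]) (intro borel_measurable_continuous_onI continuous_intros)
    also have "fst \<circ> pr = (\<lambda>x. x)" unfolding pr_def by auto
    also have "distr \<mu> borel (\<lambda>x. x) = \<mu>" by (rule distr_id2[OF setsmu[symmetric]])
    finally show "distr \<gamma> borel fst = mu_MC m \<rho>" unfolding \<mu>_def .
    have "distr \<gamma> borel snd = distr \<mu> borel (snd \<circ> pr)" unfolding \<gamma>_def
      by (rule distr_distr[OF _ measpr]) (intro borel_measurable_continuous_onI continuous_intros)
    also have "snd \<circ> pr = T" unfolding pr_def by auto
    finally show "distr \<gamma> borel snd = mu_MC m' \<rho>" unfolding transport \<mu>_def .
  qed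
  define D where "D = (m - m')\<^sup>2 + (s - s')\<^sup>2"
  have bound: "(1 / ?N) * norm (mc_radial m \<rho> \<phi> - T (mc_radial m \<rho> \<phi>)) ^ 2 \<le> D" for \<phi>
  proof -
    define u where "u = mc_radial m \<rho> \<phi> - const_field m"
    have u: "u = (R / norm (prj \<phi>)) *\<^sub>R prj \<phi>" unfolding u_def radial_eq R_def by simp
    have fu: "field_sum u = 0" unfolding u by (simp add: field_sum_scaleR field_sum_prj)
    have nu: "norm u \<le> R" unfolding u using Rp by (cases "prj \<phi> = 0") auto
    have dif: "mc_radial m \<rho> \<phi> - T (mc_radial m \<rho> \<phi>) = (m - m') *\<^sub>R ?e + (1 - R'/R) *\<^sub>R u"
      unfolding T_def u_def by (simp add: vec_eq_iff const_field_def algebra_simps)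
    have orth: "orthogonal ((m - m') *\<^sub>R ?e) ((1 - R'/R) *\<^sub>R u)"
      unfolding orthogonal_def by (simp add: inner_commute[of ?e] field_sum_inner fu)
    have "norm (mc_radial m \<rho> \<phi> - T (mc_radial m \<rho> \<phi>)) ^ 2 = (m - m')\<^sup>2 * ?N + (1 - R'/R)\<^sup>2 * (norm u)\<^sup>2"
      unfolding dif norm_add_Pythagorean[OF orth] using norm_const1[where 'n='n]
      by (simp add: power_mult_distrib)
    also have "\<dots> \<le> (m - m')\<^sup>2 * ?N + (1 - R'/R)\<^sup>2 * R\<^sup>2"
      using nu by (intro add_left_mono mult_left_mono power_mono) auto
    also have "(1 - R'/R)\<^sup>2 * R\<^sup>2 = (R - R')\<^sup>2" using Rp by (simp add: power2_eq_square field_simps)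
    also have "(R - R')\<^sup>2 = ?N * (s - s')\<^sup>2" unfolding Rs Rs'
      by (simp add: power2_eq_square algebra_simps)
    finally have "norm (mc_radial m \<rho> \<phi> - T (mc_radial m \<rho> \<phi>)) ^ 2 \<le> ?N * D"
      unfolding D_def by (simp add: algebra_simps)
    then show ?thesis using Npos by (simp add: field_simps)
  qed
  have D0: "D \<ge> 0" unfolding D_def by simp
  have W: "w2_sq (mu_MC m \<rho> :: (real^'n) measure) (mu_MC m' \<rho>) \<le> ennreal D"
  proof -
    let ?c = "\<lambda>p::(real^'n) \<times> (real^'n). ennreal ((1 / ?N) * (\<Sum>i\<in>UNIV. \<bar>fst p $ i - snd p $ i\<bar>\<^sup>2))"
    have "w2_sq (mu_MC m \<rho> :: (real^'n) measure) (mu_MC m' \<rho>) \<le> (\<integral>\<^sup>+ p. ?c p \<partial>\<gamma>)"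
      unfolding w2_sq_def by (rule INF_lower[OF gam])
    also have "(\<integral>\<^sup>+ p. ?c p \<partial>\<gamma>) = (\<integral>\<^sup>+ x. ?c (pr x) \<partial>\<mu>)"
      unfolding \<gamma>_def
    proof (rule nn_integral_distr[OF measpr])
      have "(\<lambda>p::(real^'n) \<times> (real^'n). (1 / ?N) * (\<Sum>i\<in>UNIV. \<bar>fst p $ i - snd p $ i\<bar>\<^sup>2)) \<in> borel_measurable borel"
        by (intro borel_measurable_continuous_onI continuous_intros)
      then show "?c \<in> borel_measurable (distr \<mu> borel pr)" by simp
    qed
    also have "\<dots> = (\<integral>\<^sup>+ \<phi>. ?c (pr (mc_radial m \<rho> \<phi>)) \<partial>?M)"
      unfolding mu_def'
    proof (rule nn_integral_distr[OF measRM])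
      have "(\<lambda>x::real^'n. (1 / ?N) * (\<Sum>i\<in>UNIV. \<bar>x $ i - T x $ i\<bar>\<^sup>2)) \<in> borel_measurable borel"
        unfolding T_def by (intro borel_measurable_continuous_onI continuous_intros)
      then show "(\<lambda>x. ?c (pr x)) \<in> borel_measurable (distr ?M borel (mc_radial m \<rho>))"
        unfolding pr_def by simp
    qed
    also have "\<dots> \<le> (\<integral>\<^sup>+ \<phi>. ennreal D \<partial>?M)"
    proof (rule nn_integral_mono)
      fix \<phi> show "?c (pr (mc_radial m \<rho> \<phi>)) \<le> ennreal D"
        unfolding pr_def fst_conv snd_conv cost_eq using bound[of \<phi>] by (simp add: ennreal_leI)
    qed
    also have "\<dots> = ennreal D"
      using prob_space.emeasure_space_1[OF probM] by simp
    finally show ?thesis .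
  qed
  have Wf: "w2_sq (mu_MC m \<rho> :: (real^'n) measure) (mu_MC m' \<rho>) \<noteq> \<infinity>" using W by (metis ennreal_neq_top top.extremum_uniqueI infinity_ennreal_def order_trans)
  have "enn2real (w2_sq (mu_MC m \<rho> :: (real^'n) measure) (mu_MC m' \<rho>)) \<le> enn2real (ennreal D)"
    by (rule enn2real_mono[OF W]) simp
  then have ER: "enn2real (w2_sq (mu_MC m \<rho> :: (real^'n) measure) (mu_MC m' \<rho>)) \<le> D" using D0 by simp
  have "w2 (mu_MC m \<rho> :: (real ^ 'n) measure) (mu_MC m' \<rho>) \<le> ennreal (sqrt D)"
    unfolding w2_def using Wf ER by (simp add: ennreal_leI)
  also have "\<dots> \<le> ennreal ((1 + 2 / sqrt (1 - m\<^sup>2 / \<rho>)) * \<bar>m - m'\<bar>)"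
    unfolding D_def s_def s'_def by (intro ennreal_leI final_ineq assms)
  finally show ?thesis .
qed

end
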